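(* Let $L_m$ be as defined in the context. If $m\in\{6,8,10\}$, then $\lambda(L_m)>\sqrt{m-2}$. If $m\ge 12$ is even, then $\sqrt{m-2.5}<\lambda(L_m)<\sqrt{m-2}$. Moreover, $\lambda(L_6)\approx 2.1149$, $\lambda(L_8)\approx 2.4938$ and $\lambda(L_{10})\approx 2.8424$.
   Context: For even $m\ge 6$, $L_m$ is the graph obtained from $SK_{2,\frac{m-2}{2}}$ (the complete bipartite graph $K_{2,\frac{m-2}{2}}$ with one edge subdivided) by attaching a pendant edge to a vertex of maximum degree; equivalently, take a 5-cycle $u_1u_2u_3u_4u_5$, add $\frac{m-6}{2}$ new vertices each adjacent exactly to $u_1$ and $u_3$, and one new vertex adjacent only to $u_1$. It has $m$ edges. $\lambda(\cdot)$ denotes the largest adjacency eigenvalue; $\lambda(L_m)$ is the largest root of $x^6-mx^4+(\tfrac{5m}{2}-7)x^2+(4-m)x+2-\tfrac m2$. *)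

theory Defs
  imports "Jordan_Normal_Form.Matrix" "Jordan_Normal_Form.Char_Poly"
begin

(* Simple graphs on vertex set {0..<n} given by a symmetric irreflexive adjacency predicate. *)

definition adj_mat :: "nat \<Rightarrow> (nat \<Rightarrow> nat \<Rightarrow> bool) \<Rightarrow> real mat" where
  "adj_mat n E = mat n n (\<lambda>(i, j). if E i j then 1 else 0)"

definition lambda_max :: "nat \<Rightarrow> (nat \<Rightarrow> nat \<Rightarrow> bool) \<Rightarrow> real" where
  "lambda_max n E = Max {x. eigenvalue (adj_mat n E) x}"

(* L_m for even m \<ge> 6: vertices 0..4 form the 5-cycle u1..u5 (u_i = i-1),
   vertex 5 is the pendant vertex adjacent only to u1 = 0,
   vertices 6 .. 6 + (m-6)/2 - 1 are adjacent exactly to u1 = 0 and u3 = 2. *)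
definition L_nverts :: "nat \<Rightarrow> nat" where
  "L_nverts m = 6 + (m - 6) div 2"

definition L_edge0 :: "nat \<Rightarrow> nat \<Rightarrow> nat \<Rightarrow> bool" where
  "L_edge0 m i j =
     ((i < 5 \<and> j = (i + 1) mod 5)
      \<or> (i = 0 \<and> j = 5)
      \<or> ((i = 0 \<or> i = 2) \<and> 6 \<le> j \<and> j < L_nverts m))"

definition L_adj :: "nat \<Rightarrow> nat \<Rightarrow> nat \<Rightarrow> bool" where
  "L_adj m i j = (i < L_nverts m \<and> j < L_nverts m \<and> (L_edge0 m i j \<or> L_edge0 m j i))"

definition lambda_L :: "nat \<Rightarrow> real" where
  "lambda_L m = lambda_max (L_nverts m) (L_adj m)"

end

theory Submission
  imports Defs
begin

lemma adj_row:
  assumes "dim_vec v = n" "i < n"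
  shows "(adj_mat n E *\<^sub>v v) $ i = (\<Sum>j\<in>{j. j < n \<and> E i j}. v $ j)"
proof -
  have "(adj_mat n E *\<^sub>v v) $ i = (\<Sum>j\<in>{0..<n}. (if E i j then 1 else 0) * v $ j)"
    using assms by (simp add: adj_mat_def scalar_prod_def)
  also have "\<dots> = (\<Sum>j\<in>{0..<n}. if E i j then v $ j else 0)"
    by (rule sum.cong) auto
  also have "\<dots> = (\<Sum>j\<in>{j. j < n \<and> E i j}. v $ j)"
    by (simp add: sum.If_cases Int_def conj_commute)
  finally show ?thesis .
qed

lemma cyc: fixes i j :: nat shows "(i < 5 \<and> j = (i + 1) mod 5) \<longleftrightarrow>
   ((i = 0 \<and> j = 1) \<or> (i = 1 \<and> j = 2) \<or> (i = 2 \<and> j = 3) \<or> (i = 3 \<and> j = 4) \<or> (i = 4 \<and> j = 0))"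
proof
  assume "i < 5 \<and> j = (i + 1) mod 5"
  then show "(i = 0 \<and> j = 1) \<or> (i = 1 \<and> j = 2) \<or> (i = 2 \<and> j = 3) \<or> (i = 3 \<and> j = 4) \<or> (i = 4 \<and> j = 0)"
  proof -
    have "i = 0 \<or> i = 1 \<or> i = 2 \<or> i = 3 \<or> i = 4" using \<open>i < 5 \<and> j = (i + 1) mod 5\<close> by arith
    then show ?thesis using \<open>i < 5 \<and> j = (i + 1) mod 5\<close> by auto
  qed
qed auto

lemma L_edge0_alt: "L_edge0 m i j =
     ((i = 0 \<and> j = 1) \<or> (i = 1 \<and> j = 2) \<or> (i = 2 \<and> j = 3) \<or> (i = 3 \<and> j = 4) \<or> (i = 4 \<and> j = 0)
      \<or> (i = 0 \<and> j = 5)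
      \<or> ((i = 0 \<or> i = 2) \<and> 6 \<le> j \<and> j < L_nverts m))"
  unfolding L_edge0_def cyc by simp

lemma n6: "6 \<le> L_nverts m" by (simp add: L_nverts_def)

lemma nb0: "{j. j < L_nverts m \<and> L_adj m 0 j} = {1,4,5} \<union> {6..<L_nverts m}"
  using n6[of m] by (auto simp: L_adj_def L_edge0_alt)
lemma nb1: "{j. j < L_nverts m \<and> L_adj m 1 j} = {0,2}"
  using n6[of m] by (auto simp: L_adj_def L_edge0_alt)
lemma nb1': "{j. j < L_nverts m \<and> L_adj m (Suc 0) j} = {0,2}"
  using nb1 by simp
lemma nb2: "{j. j < L_nverts m \<and> L_adj m 2 j} = {1,3} \<union> {6..<L_nverts m}"
  using n6[of m] by (auto simp: L_adj_def L_edge0_alt)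
lemma nb3: "{j. j < L_nverts m \<and> L_adj m 3 j} = {2,4}"
  using n6[of m] by (auto simp: L_adj_def L_edge0_alt)
lemma nb4: "{j. j < L_nverts m \<and> L_adj m 4 j} = {0,3}"
  using n6[of m] by (auto simp: L_adj_def L_edge0_alt)
lemma nb5: "{j. j < L_nverts m \<and> L_adj m 5 j} = {0}"
  using n6[of m] by (auto simp: L_adj_def L_edge0_alt)
lemma nb6: "6 \<le> i \<Longrightarrow> i < L_nverts m \<Longrightarrow> {j. j < L_nverts m \<and> L_adj m i j} = {0,2}"
  using n6[of m] by (auto simp: L_adj_def L_edge0_alt)

definition Pm :: "real \<Rightarrow> real \<Rightarrow> real" where
  "Pm m x = x^6 - m*x^4 + (5*m/2 - 7)*x^2 + (4-m)*x + 2 - m/2"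

lemma quot_elim:
  fixes k t a b c d e p S :: real
  assumes h0: "k*a = b+e+p+S" and h1: "k*b = a+c" and h2: "k*c = b+d+S" and h3: "k*d = c+e"
    and h4: "k*e = d+a" and h5: "k*p = a" and h6: "k*S = t*(a+c)"
    and nz: "k^7 - 2*k^5*t - 6*k^5 + 5*k^3*t + 8*k^3 - 2*k^2*t - 2*k^2 - k*t - k \<noteq> 0"
  shows "a = 0 \<and> b = 0 \<and> c = 0 \<and> d = 0 \<and> e = 0 \<and> p = 0 \<and> S = 0"
proof -
  have i0: "(k^7 - 2*k^5*t - 6*k^5 + 5*k^3*t + 8*k^3 - 2*k^2*t - 2*k^2 - k*t - k) * a = (k^6 - k^4*t - 3*k^4 + k^2*t + k^2)*(k*a - (b+e+p+S)) + (k^5 - 2*k^3 + k^2)*(k*b - (a+c)) + (k^4*t + k^4 + k^3 - k^2*t - k^2)*(k*c - (b+d+S)) + (k^4 + k^3*t + k^3 - k^2*t - k^2)*(k*d - (c+e)) + (k^5 - k^3*t - 2*k^3 + k^2*t + k^2)*(k*e - (d+a)) + (k^5 - k^3*t - 3*k^3 + k*t + k)*(k*p - a) + (k^5 - 2*k^3 + k^2)*(k*S - t*(a+c))"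
    by (simp add: eval_nat_numeral algebra_simps)
  have i1: "(k^7 - 2*k^5*t - 6*k^5 + 5*k^3*t + 8*k^3 - 2*k^2*t - 2*k^2 - k*t - k) * b = (k^5 - 2*k^3 + k^2)*(k*a - (b+e+p+S)) + (k^6 - 2*k^4*t - 4*k^4 + 5*k^2*t + 3*k^2 - 2*k*t - t)*(k*b - (a+c)) + (k^5 - 3*k^3 + k^2 + k)*(k*c - (b+d+S)) + (k^4 + k^3 - 2*k^2)*(k*d - (c+e)) + (k^4 + k^3 - k^2 - k)*(k*e - (d+a)) + (k^4 - 2*k^2 + k)*(k*p - a) + (2*k^4 - 5*k^2 + 2*k + 1)*(k*S - t*(a+c))"
    by (simp add: eval_nat_numeral algebra_simps)
  have i2: "(k^7 - 2*k^5*t - 6*k^5 + 5*k^3*t + 8*k^3 - 2*k^2*t - 2*k^2 - k*t - k) * c = (k^4*t + k^4 + k^3 - k^2*t - k^2)*(k*a - (b+e+p+S)) + (k^5 - 3*k^3 + k^2 + k)*(k*b - (a+c)) + (k^6 - k^4*t - 4*k^4 + k^2*t + 2*k^2)*(k*c - (b+d+S)) + (k^5 - k^3*t - 3*k^3 + k^2*t + k^2)*(k*d - (c+e)) + (k^4 + k^3*t + k^3 - k^2*t - 2*k^2)*(k*e - (d+a)) + (k^3*t + k^3 + k^2 - k*t - k)*(k*p - a) + (k^5 - 3*k^3 + k^2 + k)*(k*S - t*(a+c))"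
    by (simp add: eval_nat_numeral algebra_simps)
  have i3: "(k^7 - 2*k^5*t - 6*k^5 + 5*k^3*t + 8*k^3 - 2*k^2*t - 2*k^2 - k*t - k) * d = (k^4 + k^3*t + k^3 - k^2*t - k^2)*(k*a - (b+e+p+S)) + (k^4 + k^3 - 2*k^2)*(k*b - (a+c)) + (k^5 - k^3*t - 3*k^3 + k^2*t + k^2)*(k*c - (b+d+S)) + (k^6 - 2*k^4*t - 4*k^4 + 2*k^2*t + 2*k^2)*(k*d - (c+e)) + (k^5 - 2*k^3*t - 3*k^3 + k^2*t + k^2 + k*t + k)*(k*e - (d+a)) + (k^3 + k^2*t + k^2 - k*t - k)*(k*p - a) + (k^4 + k^3 - 2*k^2)*(k*S - t*(a+c))"
    by (simp add: eval_nat_numeral algebra_simps)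
  have i4: "(k^7 - 2*k^5*t - 6*k^5 + 5*k^3*t + 8*k^3 - 2*k^2*t - 2*k^2 - k*t - k) * e = (k^5 - k^3*t - 2*k^3 + k^2*t + k^2)*(k*a - (b+e+p+S)) + (k^4 + k^3 - k^2 - k)*(k*b - (a+c)) + (k^4 + k^3*t + k^3 - k^2*t - 2*k^2)*(k*c - (b+d+S)) + (k^5 - 2*k^3*t - 3*k^3 + k^2*t + k^2 + k*t + k)*(k*d - (c+e)) + (k^6 - 2*k^4*t - 4*k^4 + 2*k^2*t + 3*k^2)*(k*e - (d+a)) + (k^4 - k^2*t - 2*k^2 + k*t + k)*(k*p - a) + (k^4 + k^3 - k^2 - k)*(k*S - t*(a+c))"
    by (simp add: eval_nat_numeral algebra_simps)
  have i5: "(k^7 - 2*k^5*t - 6*k^5 + 5*k^3*t + 8*k^3 - 2*k^2*t - 2*k^2 - k*t - k) * p = (k^5 - k^3*t - 3*k^3 + k*t + k)*(k*a - (b+e+p+S)) + (k^4 - 2*k^2 + k)*(k*b - (a+c)) + (k^3*t + k^3 + k^2 - k*t - k)*(k*c - (b+d+S)) + (k^3 + k^2*t + k^2 - k*t - k)*(k*d - (c+e)) + (k^4 - k^2*t - 2*k^2 + k*t + k)*(k*e - (d+a)) + (k^6 - 2*k^4*t - 5*k^4 + 4*k^2*t + 5*k^2 - 2*k*t - 2*k)*(k*p - a) + (k^4 - 2*k^2 + k)*(k*S - t*(a+c))"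
    by (simp add: eval_nat_numeral algebra_simps)
  have i6: "(k^7 - 2*k^5*t - 6*k^5 + 5*k^3*t + 8*k^3 - 2*k^2*t - 2*k^2 - k*t - k) * S = (k^5*t - 2*k^3*t + k^2*t)*(k*a - (b+e+p+S)) + (2*k^4*t - 5*k^2*t + 2*k*t + t)*(k*b - (a+c)) + (k^5*t - 3*k^3*t + k^2*t + k*t)*(k*c - (b+d+S)) + (k^4*t + k^3*t - 2*k^2*t)*(k*d - (c+e)) + (k^4*t + k^3*t - k^2*t - k*t)*(k*e - (d+a)) + (k^4*t - 2*k^2*t + k*t)*(k*p - a) + (k^6 - 6*k^4 + 8*k^2 - 2*k - 1)*(k*S - t*(a+c))"
    by (simp add: eval_nat_numeral algebra_simps)

  have z: "k*a - (b+e+p+S) = 0" "k*b - (a+c) = 0" "k*c - (b+d+S) = 0" "k*d - (c+e) = 0"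
    "k*e - (d+a) = 0" "k*p - a = 0" "k*S - t*(a+c) = 0" using assms by simp_all
  show ?thesis using i0 i1 i2 i3 i4 i5 i6 nz unfolding z by simp
qed

lemma m_t:
  assumes "even m" "6 \<le> m"
  shows "real m = 2 * real (L_nverts m - 6) + 6"
proof -
  have "m = 2 * (L_nverts m - 6) + 6" using assms unfolding L_nverts_def by presburger
  then show ?thesis by (metis of_nat_add of_nat_mult of_nat_numeral)
qed

lemma row_sums:
  fixes v :: "real vec"
  assumes dv: "dim_vec v = L_nverts m"
  defines "A \<equiv> adj_mat (L_nverts m) (L_adj m)"
  defines "S \<equiv> (\<Sum>j\<in>{6..<L_nverts m}. v $ j)"
  shows "(A *\<^sub>v v) $ 0 = v$1 + v$4 + v$5 + S"
    "(A *\<^sub>v v) $ 1 = v$0 + v$2"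
    "(A *\<^sub>v v) $ 2 = v$1 + v$3 + S"
    "(A *\<^sub>v v) $ 3 = v$2 + v$4"
    "(A *\<^sub>v v) $ 4 = v$0 + v$3"
    "(A *\<^sub>v v) $ 5 = v$0"
    "\<And>i. 6 \<le> i \<Longrightarrow> i < L_nverts m \<Longrightarrow> (A *\<^sub>v v) $ i = v$0 + v$2"
proof -
  have n: "6 \<le> L_nverts m" by (rule n6)
  show "(A *\<^sub>v v) $ 0 = v$1 + v$4 + v$5 + S"
    unfolding A_def S_def using n by (subst adj_row[OF dv]) (auto simp: nb0 sum.union_disjoint)
  show "(A *\<^sub>v v) $ 1 = v$0 + v$2"
    unfolding A_def using n by (subst adj_row[OF dv]) (auto simp: nb1')
  show "(A *\<^sub>v v) $ 2 = v$1 + v$3 + S"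
    unfolding A_def S_def using n by (subst adj_row[OF dv]) (auto simp: nb2 sum.union_disjoint)
  show "(A *\<^sub>v v) $ 3 = v$2 + v$4"
    unfolding A_def using n by (subst adj_row[OF dv]) (auto simp: nb3)
  show "(A *\<^sub>v v) $ 4 = v$0 + v$3"
    unfolding A_def using n by (subst adj_row[OF dv]) (auto simp: nb4)
  show "(A *\<^sub>v v) $ 5 = v$0"
    unfolding A_def using n by (subst adj_row[OF dv]) (auto simp: nb5)
  show "\<And>i. 6 \<le> i \<Longrightarrow> i < L_nverts m \<Longrightarrow> (A *\<^sub>v v) $ i = v$0 + v$2"
    unfolding A_def by (subst adj_row[OF dv]) (auto simp: nb6)
qed

lemma dim_adj[simp]: "dim_row (adj_mat n E) = n" "dim_col (adj_mat n E) = n"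
  by (simp_all add: adj_mat_def)

lemma ev_root:
  assumes em: "even m" "6 \<le> m" and ev: "eigenvalue (adj_mat (L_nverts m) (L_adj m)) k"
    and k0: "k \<noteq> 0"
  shows "Pm (real m) k = 0"
proof (rule ccontr)
  assume nP: "Pm (real m) k \<noteq> 0"
  define n where "n = L_nverts m"
  define A where "A = adj_mat n (L_adj m)"
  obtain v where v: "v \<in> carrier_vec n" "v \<noteq> 0\<^sub>v n" "A *\<^sub>v v = k \<cdot>\<^sub>v v"
    using ev unfolding eigenvalue_def eigenvector_def A_def n_def by auto
  have dv: "dim_vec v = L_nverts m" using v(1) n_def by simp
  have n6': "6 \<le> n" using n6 n_def by simp
  have comp: "\<And>i. i < n \<Longrightarrow> (A *\<^sub>v v) $ i = k * v $ i"
    using v(3) dv n_def by (metis index_smult_vec(1))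
  define S where "S = (\<Sum>j\<in>{6..<n}. v $ j)"
  define t where "t = real (n - 6)"
  note rs = row_sums[OF dv, folded n_def, folded A_def, folded S_def]
  have e0: "k * v$0 = v$1 + v$4 + v$5 + S" using comp[of 0] rs(1) n6' by simp
  have e1: "k * v$1 = v$0 + v$2" using comp[of 1] rs(2) n6' by simp
  have e2: "k * v$2 = v$1 + v$3 + S" using comp[of 2] rs(3) n6' by simp
  have e3: "k * v$3 = v$2 + v$4" using comp[of 3] rs(4) n6' by simp
  have e4: "k * v$4 = v$3 + v$0" using comp[of 4] rs(5) n6' by simp
  have e5: "k * v$5 = v$0" using comp[of 5] rs(6) n6' by simp
  have ej: "\<And>j. 6 \<le> j \<Longrightarrow> j < n \<Longrightarrow> v$j = (v$0 + v$2) / k"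
    using comp rs(7) k0 n_def by (metis nonzero_mult_div_cancel_left)
  have "S = (\<Sum>j\<in>{6..<n}. (v$0 + v$2) / k)" unfolding S_def by (rule sum.cong) (auto simp: ej)
  then have "S = t * ((v$0 + v$2) / k)" by (simp add: t_def)
  then have e6: "k * S = t * (v$0 + v$2)" using k0 by (simp add: field_simps)
  have mt: "real m = 2 * t + 6" using m_t[OF em] by (simp add: t_def n_def)
  have eqP: "k * Pm (real m) k = k^7 - 2*k^5*t - 6*k^5 + 5*k^3*t + 8*k^3 - 2*k^2*t - 2*k^2 - k*t - k"
    unfolding mt Pm_def by (simp add: eval_nat_numeral field_simps)
  have "k * Pm (real m) k \<noteq> 0" using k0 nP by simp
  then have nz: "k^7 - 2*k^5*t - 6*k^5 + 5*k^3*t + 8*k^3 - 2*k^2*t - 2*k^2 - k*t - k \<noteq> 0"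
    using eqP by (simp only: not_False_eq_True)
  have z: "v$0 = 0 \<and> v$1 = 0 \<and> v$2 = 0 \<and> v$3 = 0 \<and> v$4 = 0 \<and> v$5 = 0 \<and> S = 0"
    by (rule quot_elim[OF e0 e1 e2 e3 _ e5 e6 nz]) (use e4 in simp)
  have "v = 0\<^sub>v n"
  proof (rule eq_vecI)
    show "dim_vec v = dim_vec (0\<^sub>v n)" using dv n_def by simp
    fix i assume "i < dim_vec (0\<^sub>v n)"
    then have i: "i < n" by simp
    show "v $ i = 0\<^sub>v n $ i"
    proof (cases "6 \<le> i")
      case True then show ?thesis using ej[OF True i] z i by simp
    next
      case False
      then have "i = 0 \<or> i = 1 \<or> i = 2 \<or> i = 3 \<or> i = 4 \<or> i = 5" by arith
      then show ?thesis using z i by auto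
    qed
  qed
  then show False using v(2) by simp
qed

lemma root_ev:
  assumes em: "even m" "6 \<le> m" and r2: "2 \<le> r" and P0: "Pm (real m) r = 0"
  shows "eigenvalue (adj_mat (L_nverts m) (L_adj m)) r"
proof -
  define n where "n = L_nverts m"
  define A where "A = adj_mat n (L_adj m)"
  define t where "t = real (n - 6)"
  define a where "a = r^5 - 2*r^3 + r^2"
  define b where "b = 2*r^4 - 5*r^2 + 2*r + 1"
  define c where "c = r^5 - 3*r^3 + r^2 + r"
  define d where "d = r^4 + r^3 - 2*r^2"
  define e where "e = r^4 + r^3 - r^2 - r"
  define p where "p = r^4 - 2*r^2 + r"
  define v where "v = vec n (\<lambda>i. if i = 0 then a else if i = 1 then b else if i = 2 then c
      else if i = 3 then d else if i = 4 then e else if i = 5 then p else b)"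
  have n6': "6 \<le> n" using n6 n_def by simp
  have dv: "dim_vec v = L_nverts m" using n_def v_def by simp
  have vi: "v$0 = a" "v$1 = b" "v$2 = c" "v$3 = d" "v$4 = e" "v$5 = p"
    "\<And>j. 6 \<le> j \<Longrightarrow> j < n \<Longrightarrow> v$j = b"
    using n6' by (auto simp: v_def)
  define S where "S = (\<Sum>j\<in>{6..<n}. v $ j)"
  have S: "S = t * b" unfolding S_def t_def using vi(7) by simp
  note rs = row_sums[OF dv, folded n_def, folded A_def, folded S_def]
  have mt: "real m = 2 * t + 6" using m_t[OF em] by (simp add: t_def n_def)
  have Pt: "r^6 - (2*t+6)*r^4 + (5*(2*t+6)/2 - 7)*r^2 + (4-(2*t+6))*r + 2 - (2*t+6)/2 = 0"
    using P0 unfolding Pm_def mt .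
  have q0: "r * a = b + e + p + t * b"
  proof -
    have "r * a - (b + e + p + t * b) = r^6 - (2*t+6)*r^4 + (5*(2*t+6)/2 - 7)*r^2 + (4-(2*t+6))*r + 2 - (2*t+6)/2"
      unfolding a_def b_def e_def p_def by (simp add: eval_nat_numeral field_simps)
    then show ?thesis using Pt by linarith
  qed
  have q2: "r * c = b + d + t * b"
  proof -
    have "r * c - (b + d + t * b) = r^6 - (2*t+6)*r^4 + (5*(2*t+6)/2 - 7)*r^2 + (4-(2*t+6))*r + 2 - (2*t+6)/2"
      unfolding c_def b_def d_def by (simp add: eval_nat_numeral field_simps)
    then show ?thesis using Pt by linarith
  qed
  have q1: "r * b = a + c" unfolding a_def b_def c_def by (simp add: eval_nat_numeral algebra_simps)
  have q3: "r * d = c + e" unfolding c_def d_def e_def by (simp add: eval_nat_numeral algebra_simps)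
  have q4: "r * e = a + d" unfolding a_def d_def e_def by (simp add: eval_nat_numeral algebra_simps)
  have q5: "r * p = a" unfolding a_def p_def by (simp add: eval_nat_numeral algebra_simps)
  have bpos: "b > 0"
  proof -
    have "r^2 \<ge> 2^2" using r2 by (intro power_mono) simp_all
    then have "r^2 \<ge> 4" by simp
    have eq: "r^2 * r^2 = r^4" by (simp add: eval_nat_numeral)
    have "4 * r^2 \<le> r^2 * r^2" using \<open>r^2 \<ge> 4\<close> by (intro mult_right_mono) simp_all
    then have "r^4 \<ge> 4 * r^2" using eq by linarith
    then show ?thesis unfolding b_def using r2 \<open>r^2 \<ge> 4\<close> by linarith
  qed
  have "A *\<^sub>v v = r \<cdot>\<^sub>v v"
  proof (rule eq_vecI)
    show "dim_vec (A *\<^sub>v v) = dim_vec (r \<cdot>\<^sub>v v)" using dv n_def by (simp add: A_def)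
    fix i assume "i < dim_vec (r \<cdot>\<^sub>v v)"
    then have i: "i < n" using dv n_def by simp
    have rhs: "(r \<cdot>\<^sub>v v) $ i = r * v $ i" using i dv n_def by simp
    show "(A *\<^sub>v v) $ i = (r \<cdot>\<^sub>v v) $ i"
    proof (cases "6 \<le> i")
      case True then show ?thesis using rs(7)[OF True] i vi q1 rhs n_def by simp
    next
      case False
      then have "i = 0 \<or> i = 1 \<or> i = 2 \<or> i = 3 \<or> i = 4 \<or> i = 5" by arith
      then show ?thesis
      proof (elim disjE)
        assume "i = 0" then show ?thesis using rs(1) vi(1,2,5,6) rhs q0 S by simp
      next
        assume "i = 1" then show ?thesis using rs(2) vi(1,2,3) rhs q1 by simp
      next
        assume "i = 2" then show ?thesis using rs(3) vi(2,3,4) rhs q2 S by simp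
      next
        assume "i = 3" then show ?thesis using rs(4) vi(3,4,5) rhs q3 by simp
      next
        assume "i = 4" then show ?thesis using rs(5) vi(1,4,5) rhs q4 by (simp add: add.commute)
      next
        assume "i = 5" then show ?thesis using rs(6) vi(1,6) rhs q5 by simp
      qed
    qed
  qed
  moreover have "v \<noteq> 0\<^sub>v n"
  proof
    assume "v = 0\<^sub>v n"
    then have "v $ 1 = 0" using n6' by simp
    then show False using vi(2) bpos by simp
  qed
  moreover have "v \<in> carrier_vec n" using dv unfolding n_def by (rule carrier_vecI)
  ultimately show ?thesis unfolding eigenvalue_def eigenvector_def A_def n_def by auto
qed



lemma pos6:
  fixes s c0 c1 c2 c3 c4 c5 c6 :: real
  assumes s: "0 \<le> s" and "0 < c0" "0 \<le> c1" "0 \<le> c2" "0 \<le> c3" "0 \<le> c4" "0 \<le> c5" "0 \<le> c6"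
  shows "0 < c0 + c1*s^1 + c2*s^2 + c3*s^3 + c4*s^4 + c5*s^5 + c6*s^6"
proof -
  have "0 \<le> c1*s^1" "0 \<le> c2*s^2" "0 \<le> c3*s^3" "0 \<le> c4*s^4" "0 \<le> c5*s^5" "0 \<le> c6*s^6"
    using assms by (intro mult_nonneg_nonneg zero_le_power; simp)+
  then show ?thesis using assms(2) by linarith
qed

lemma hi6: assumes "2.11499 \<le> x" shows "Pm 6 x > 0"
proof -
  define s where "s = x - 2.11499"
  have s0: "0 \<le> s" using assms s_def by simp
  have x: "x = 2.11499 + s" using s_def by simp
  have "Pm 6 x = (4839297146940706630982481001/1000000000000000000000000000000) + (293498907799490216785672497/5000000000000000000000000)*s^1 + (2942117496470177962003/20000000000000000000)*s^2 + (6922748678884499/50000000000000)*s^3 + (122195481003/2000000000)*s^4 + (634497/50000)*s^5 + (1)*s^6"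
    unfolding x Pm_def by (simp add: eval_nat_numeral field_simps)
  also have "\<dots> > 0" by (rule pos6[OF s0]) simp_all
  finally show ?thesis .
qed

lemma lo6: "Pm 6 2.11481 < 0" by (simp add: Pm_def power_divide)

lemma hi8: assumes "2.49389 \<le> x" shows "Pm 8 x > 0"
proof -
  define s where "s = x - 2.49389"
  have s0: "0 \<le> s" using assms s_def by simp
  have x: "x = 2.49389 + s" using s_def by simp
  have "Pm 8 x = (3943925976661188344986455161/1000000000000000000000000000000) + (716552223781117006316697847/5000000000000000000000000)*s^1 + (5893898963429712707123/20000000000000000000)*s^2 + (11520493262650869/50000000000000)*s^3 + (170584619963/2000000000)*s^4 + (748167/50000)*s^5 + (1)*s^6"
    unfolding x Pm_def by (simp add: eval_nat_numeral field_simps)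
  also have "\<dots> > 0" by (rule pos6[OF s0]) simp_all
  finally show ?thesis .
qed

lemma lo8: "Pm 8 2.49371 < 0" by (simp add: Pm_def power_divide)

lemma hi10: assumes "2.84249 \<le> x" shows "Pm 10 x > 0"
proof -
  define s where "s = x - 2.84249"
  have s0: "0 \<le> s" using assms s_def by simp
  have x: "x = 2.84249 + s" using s_def by simp
  have "Pm 10 x = (22076743966594939966500482001/1000000000000000000000000000000) + (1455259668503540500124888747/5000000000000000000000000)*s^1 + (10249005830404892964003/20000000000000000000)*s^2 + (17281626872290249/50000000000000)*s^3 + (222392482003/2000000000)*s^4 + (852747/50000)*s^5 + (1)*s^6"
    unfolding x Pm_def by (simp add: eval_nat_numeral field_simps)
  also have "\<dots> > 0" by (rule pos6[OF s0]) simp_all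
  finally show ?thesis .
qed

lemma lo10: "Pm 10 2.84231 < 0" by (simp add: Pm_def power_divide)

lemma g_pos:
  fixes x :: real assumes "3.16 \<le> x"
  shows "x^4/2 - x^3 - 5*x^2/2 + 2*x + 1 > 0"
proof -
  define s where "s = x - 3.16"
  have s0: "0 \<le> s" using assms s_def by simp
  have x: "x = 3.16 + s" using s_def by simp
  have "x^4/2 - x^3 - 5*x^2/2 + 2*x + 1 = (256878/390625) + (302378/15625)*s^1 + (22471/1250)*s^2 + (133/25)*s^3 + (1/2)*s^4 + 0*s^5 + 0*s^6"
    unfolding x by (simp add: eval_nat_numeral field_simps)
  also have "\<dots> > 0" by (rule pos6[OF s0]) simp_all
  finally show ?thesis .
qed

lemma big_hi:
  fixes m x :: real
  assumes m: "12 \<le> m" and x: "sqrt (m - 2) \<le> x"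
  shows "Pm m x > 0"
proof -
  have s10: "sqrt 10 \<le> sqrt (m - 2)" using m by simp
  have "3.16 \<le> sqrt 10" by (rule real_le_rsqrt) (simp add: power2_eq_square)
  then have x3: "3.16 \<le> x" using s10 x by linarith
  have "(sqrt (m - 2))^2 \<le> x^2" using x m by (intro power_mono) simp_all
  then have "m - 2 \<le> x^2" using m by simp
  define y where "y = x^2 - (m - 2)"
  have y0: "0 \<le> y" using \<open>m - 2 \<le> x^2\<close> y_def by simp
  have mm: "m = x^2 + 2 - y" using y_def by simp
  have "Pm m x = (x^4/2 - x^3 - 5*x^2/2 + 2*x + 1) + y * (x^4 - 5*x^2/2 + x + 1/2)"
    unfolding mm Pm_def by (simp add: eval_nat_numeral field_simps)
  moreover have "x^4/2 - x^3 - 5*x^2/2 + 2*x + 1 > 0" using g_pos[OF x3] .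
  moreover have "x^4 - 5*x^2/2 + x + 1/2 \<ge> 0"
  proof -
    have "3^2 \<le> x^2" using x3 by (intro power_mono) simp_all
    then have "9 \<le> x^2" by simp
    have "9 * x^2 \<le> x^2 * x^2" using \<open>9 \<le> x^2\<close> by (intro mult_right_mono) simp_all
    moreover have "x^2 * x^2 = x^4" by (simp add: eval_nat_numeral)
    moreover have "0 \<le> x" using x3 by simp
    ultimately show ?thesis using \<open>9 \<le> x^2\<close> by linarith
  qed
  ultimately show ?thesis using y0 by (simp add: add_pos_nonneg)
qed

lemma big_lo:
  fixes m :: real
  assumes m: "12 \<le> m"
  shows "Pm m (sqrt (m - 2.5)) < 0"
proof -
  define x where "x = sqrt (m - 2.5)"
  have x2: "x^2 = m - 2.5" using m x_def by simp
  have x3: "3 \<le> x" unfolding x_def using m by (intro real_le_rsqrt) (simp add: power2_eq_square)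
  have mm: "m = x^2 + 2.5" using x2 by simp
  have "Pm m x = -(x^3) - 5*x^2/4 + 3*x/2 + 3/4"
    unfolding mm Pm_def by (simp add: eval_nat_numeral field_simps)
  moreover have "x * 9 \<le> x * x^2" using x2 m x3 by (intro mult_left_mono) simp_all
  moreover have "x * x^2 = x^3" by (simp add: eval_nat_numeral)
  moreover have "0 \<le> x^2" by simp
  ultimately show ?thesis using x3 unfolding x_def[symmetric] by linarith
qed

lemma fin_ev: "finite {x. eigenvalue (adj_mat n E) x}"
proof -
  have A: "adj_mat n E \<in> carrier_mat n n" by (simp add: adj_mat_def)
  have "char_poly (adj_mat n E) \<noteq> 0" using degree_monic_char_poly[OF A] by auto
  then have "finite {x. poly (char_poly (adj_mat n E)) x = 0}" by (rule poly_roots_finite)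
  then show ?thesis using eigenvalue_root_char_poly[OF A] by simp
qed

lemma bounds:
  assumes em: "even m" "6 \<le> m" and lo2: "2 \<le> lo" and lohi: "lo < hi"
    and plo: "Pm (real m) lo < 0" and phi: "\<And>x. hi \<le> x \<Longrightarrow> Pm (real m) x > 0"
  shows "lo < lambda_L m \<and> lambda_L m < hi"
proof -
  have cont: "continuous_on {lo..hi} (Pm (real m))" unfolding Pm_def by (intro continuous_intros)
  obtain r where r: "lo \<le> r" "r \<le> hi" "Pm (real m) r = 0"
    using IVT'[of "Pm (real m)" lo 0 hi] plo phi[of hi] lohi cont by force
  have rlo: "lo < r" using r plo by (cases "r = lo") auto
  have evr: "eigenvalue (adj_mat (L_nverts m) (L_adj m)) r" using root_ev[OF em _ r(3)] rlo lo2 by simp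
  define S where "S = {x. eigenvalue (adj_mat (L_nverts m) (L_adj m)) x}"
  have fS: "finite S" unfolding S_def by (rule fin_ev)
  have rS: "r \<in> S" using evr S_def by simp
  have lam: "lambda_L m = Max S" unfolding lambda_L_def lambda_max_def S_def by simp
  have ge: "r \<le> Max S" using fS rS by simp
  have inS: "Max S \<in> S" using fS rS by (intro Max_in) auto
  have "Max S \<noteq> 0" using ge rlo lo2 by linarith
  then have "Pm (real m) (Max S) = 0" using ev_root[OF em] inS S_def by simp
  then have "Max S < hi"
  proof -
    assume P: "Pm (real m) (Max S) = 0"
    show "Max S < hi"
    proof (rule ccontr)
      assume "\<not> Max S < hi"
      then have "hi \<le> Max S" by simp
      from phi[OF this] P show False by simp
    qed
  qed
  then show ?thesis using lam ge rlo by simp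
qed

theorem lemma2p1:
  shows "(\<forall>m::nat. m \<in> {6, 8, 10} \<longrightarrow> lambda_L m > sqrt (real m - 2))
       \<and> (\<forall>m::nat. even m \<and> m \<ge> 12 \<longrightarrow>
            sqrt (real m - 2.5) < lambda_L m \<and> lambda_L m < sqrt (real m - 2))
       \<and> \<bar>lambda_L 6 - 2.1149\<bar> < 0.0001
       \<and> \<bar>lambda_L 8 - 2.4938\<bar> < 0.0001
       \<and> \<bar>lambda_L 10 - 2.8424\<bar> < 0.0001"
proof -
  have b6: "2.11481 < lambda_L 6 \<and> lambda_L 6 < 2.11499"
    using bounds[of 6 "2.11481" "2.11499"] lo6 hi6 by simp
  have b8: "2.49371 < lambda_L 8 \<and> lambda_L 8 < 2.49389"
    using bounds[of 8 "2.49371" "2.49389"] lo8 hi8 by simp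
  have b10: "2.84231 < lambda_L 10 \<and> lambda_L 10 < 2.84249"
    using bounds[of 10 "2.84231" "2.84249"] lo10 hi10 by simp
  have s6: "sqrt (real 6 - 2) < 2.11481" by (intro real_less_lsqrt) (simp_all add: power2_eq_square)
  have s8: "sqrt (real 8 - 2) < 2.49371" by (intro real_less_lsqrt) (simp_all add: power2_eq_square)
  have s10: "sqrt (real 10 - 2) < 2.84231" by (intro real_less_lsqrt) (simp_all add: power2_eq_square)
  have P1: "\<forall>m::nat. m \<in> {6, 8, 10} \<longrightarrow> lambda_L m > sqrt (real m - 2)"
  proof (intro allI impI)
    fix m :: nat assume "m \<in> {6, 8, 10}"
    then show "lambda_L m > sqrt (real m - 2)"
      using b6 b8 b10 s6 s8 s10 by (auto simp del: of_nat_numeral)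
  qed
  have P2: "\<forall>m::nat. even m \<and> m \<ge> 12 \<longrightarrow>
            sqrt (real m - 2.5) < lambda_L m \<and> lambda_L m < sqrt (real m - 2)"
  proof (intro allI impI)
    fix m :: nat assume h: "even m \<and> m \<ge> 12"
    have m12: "12 \<le> real m" using h by simp
    have lo2: "2 \<le> sqrt (real m - 2.5)" using m12 by (intro real_le_rsqrt) (simp add: power2_eq_square)
    have lohi: "sqrt (real m - 2.5) < sqrt (real m - 2)" by simp
    show "sqrt (real m - 2.5) < lambda_L m \<and> lambda_L m < sqrt (real m - 2)"
      using h by (intro bounds lo2 lohi big_lo[OF m12] big_hi[OF m12]) auto
  qed
  have a6: "\<bar>lambda_L 6 - 2.1149\<bar> < 0.0001" using b6 unfolding abs_diff_less_iff by simp
  have a8: "\<bar>lambda_L 8 - 2.4938\<bar> < 0.0001" using b8 unfolding abs_diff_less_iff by simp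
  have a10: "\<bar>lambda_L 10 - 2.8424\<bar> < 0.0001" using b10 unfolding abs_diff_less_iff by simp
  show ?thesis using P1 P2 a6 a8 a10 by blast
qed

end
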